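(* Let $1\le p<\infty$ and let $n,m\ge 0$ be integers with $n-m\ge 3$ and $n-m\equiv 1\pmod 2$. Then $$\left[\sum_{i=0}^{\frac{n-m-3}{2}}\binom{n}{i}^p+\binom{n}{\frac{n-m-1}{2}}^p+\frac12\sum_{j=0}^{m}\left(\left[\binom{m}{j}+\binom{n}{\frac{n-m+2j-1}{2}}\right]^p+\left[\binom{m}{j}+\binom{n}{\frac{n-m+2j+1}{2}}\right]^p\right)\right]^{1/p} \le \Big[\sum_{j=0}^{m}\binom{m}{j}^p\Big]^{1/p}+\Big[\sum_{j=0}^{n}\binom{n}{j}^p\Big]^{1/p}.$$
   Context: Binomial coefficients have their usual meaning. *)

theory Defs
  imports Complex_Main
begin

end

theory Submission imports Defs "HOL-Analysis.Analysis" begin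
lemma tp: fixes t p :: real assumes "0\<le>t" "t\<le>1" "1\<le>p" shows "t powr p \<le> t"
  by (smt (verit) assms(1,2,3) powr_le_one_le powr_nonneg_iff)
lemma pw_convex: fixes x y t p :: real
  assumes "x\<ge>0" "y\<ge>0" "0\<le>t" "t\<le>1" "p\<ge>1"
  shows "((1-t)*x + t*y) powr p \<le> (1-t)*x powr p + t * y powr p"
proof (cases "x = 0 \<or> y = 0")
  case False
  then have "x>0" "y>0" using assms by auto
  then show ?thesis using convex_onD[OF powr_convex[OF assms(5)], of t x y] assms by simp
next
  case True
  then show ?thesis
  proof
    assume "x = 0"
    then have "((1-t)*x + t*y) powr p = t powr p * y powr p" using assms by (simp add: powr_mult)
    also have "\<dots> \<le> t * y powr p" using tp[of t p] assms by (intro mult_right_mono) auto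
    finally show ?thesis using \<open>x=0\<close> assms by simp
  next
    assume "y = 0"
    then have "((1-t)*x + t*y) powr p = (1-t) powr p * x powr p" using assms by (simp add: powr_mult)
    also have "\<dots> \<le> (1-t) * x powr p" using tp[of "1-t" p] assms by (intro mult_right_mono) auto
    finally show ?thesis using \<open>y=0\<close> assms by simp
  qed
qed

lemma minkowski:
  fixes f g :: "nat \<Rightarrow> real" and p :: real
  assumes "finite S" "\<And>i. i\<in>S \<Longrightarrow> f i \<ge> 0" "\<And>i. i\<in>S \<Longrightarrow> g i \<ge> 0" "p \<ge> 1"
  shows "(\<Sum>i\<in>S. (f i + g i) powr p) \<le>
     ((\<Sum>i\<in>S. f i powr p) powr (1/p) + (\<Sum>i\<in>S. g i powr p) powr (1/p)) powr p"
proof -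
  define A where "A = (\<Sum>i\<in>S. f i powr p) powr (1/p)"
  define B where "B = (\<Sum>i\<in>S. g i powr p) powr (1/p)"
  have SA: "A powr p = (\<Sum>i\<in>S. f i powr p)" unfolding A_def using assms
    by (simp add: powr_powr sum_nonneg)
  have SB: "B powr p = (\<Sum>i\<in>S. g i powr p)" unfolding B_def using assms
    by (simp add: powr_powr sum_nonneg)
  have A0: "A \<ge> 0" "B \<ge> 0" unfolding A_def B_def by auto
  show ?thesis
  proof (cases "A = 0 \<or> B = 0")
    case True
    then show ?thesis
    proof
      assume "A = 0"
      then have "(\<Sum>i\<in>S. f i powr p) = 0" using SA assms by simp
      then have "\<forall>i\<in>S. f i powr p = 0" using assms by (subst (asm) sum_nonneg_eq_0_iff) auto
      then have "\<forall>i\<in>S. f i = 0" by auto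
      then show ?thesis using SB \<open>A=0\<close> A0 unfolding A_def[symmetric] B_def[symmetric] by simp
    next
      assume "B = 0"
      then have "(\<Sum>i\<in>S. g i powr p) = 0" using SB assms by simp
      then have "\<forall>i\<in>S. g i powr p = 0" using assms by (subst (asm) sum_nonneg_eq_0_iff) auto
      then have "\<forall>i\<in>S. g i = 0" by auto
      then show ?thesis using SA \<open>B=0\<close> A0 unfolding A_def[symmetric] B_def[symmetric] by simp
    qed
  next
    case False
    then have Ap: "A > 0" "B > 0" using A0 by auto
    define t where "t = B / (A+B)"
    have t: "0 \<le> t" "t \<le> 1" "1 - t = A/(A+B)" using Ap unfolding t_def by (auto simp: field_simps)
    have pt: "(f i + g i) powr p \<le> (A+B) powr p * ((1-t) * (f i / A) powr p + t * (g i / B) powr p)"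
      if "i \<in> S" for i
    proof -
      have "(1-t) * (f i / A) = f i / (A+B)" using Ap t(3) by simp
      moreover have "t * (g i / B) = g i / (A+B)" using Ap unfolding t_def by simp
      ultimately have "(A+B) * ((1-t) * (f i / A) + t * (g i / B)) = (A+B) * ((f i + g i)/(A+B))"
        by (simp add: add_divide_distrib)
      also have "\<dots> = f i + g i" using Ap by simp
      finally have "f i + g i = (A+B) * ((1-t) * (f i / A) + t * (g i / B))" by simp
      then have "(f i + g i) powr p = (A+B) powr p * ((1-t) * (f i / A) + t * (g i / B)) powr p"
        using Ap t assms(2,3)[OF that] by (simp add: powr_mult)
      also have "\<dots> \<le> (A+B) powr p * ((1-t) * (f i / A) powr p + t * (g i / B) powr p)"
        using pw_convex[of "f i / A" "g i / B" t p] Ap t assms(2,3)[OF that] assms(4)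
        by (intro mult_left_mono) auto
      finally show ?thesis .
    qed
    have "(\<Sum>i\<in>S. (f i + g i) powr p) \<le> (\<Sum>i\<in>S. (A+B) powr p * ((1-t) * (f i / A) powr p + t * (g i / B) powr p))"
      using pt by (intro sum_mono) auto
    also have "\<dots> = (A+B) powr p * ((1-t) * (\<Sum>i\<in>S. f i powr p) / A powr p + t * (\<Sum>i\<in>S. g i powr p) / B powr p)"
      using Ap assms by (simp add: sum_distrib_left sum_distrib_right sum.distrib powr_divide sum_divide_distrib algebra_simps)
    also have "\<dots> = (A+B) powr p"
    proof -
      have "(\<Sum>i\<in>S. f i powr p) / A powr p = 1" "(\<Sum>i\<in>S. g i powr p) / B powr p = 1"
        using SA SB Ap by (metis div_self powr_gt_zero less_irrefl)+
      then have "(1-t) * (\<Sum>i\<in>S. f i powr p) / A powr p = 1 - t" "t * (\<Sum>i\<in>S. g i powr p) / B powr p = t"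
        by (metis mult.right_neutral times_divide_eq_right)+
      then show ?thesis by simp
    qed
    finally show ?thesis unfolding A_def B_def .
  qed
qed
lemma split3:
  fixes F :: "nat \<Rightarrow> real"
  assumes "h + m + 1 \<le> N + 1"
  shows "(\<Sum>i\<in>{0..N}. F i) = (\<Sum>i<h. F i) + (\<Sum>j\<in>{0..m}. F (h+j)) + (\<Sum>i\<in>{h+m+1..N}. F i)"
proof -
  have e: "{0..N} = {..<h} \<union> {h..h+m} \<union> {h+m+1..N}" using assms by auto
  have "(\<Sum>i\<in>{0..N}. F i) = (\<Sum>i<h. F i) + (\<Sum>i\<in>{h..h+m}. F i) + (\<Sum>i\<in>{h+m+1..N}. F i)"
    unfolding e by (subst sum.union_disjoint, auto, subst sum.union_disjoint, auto)
  moreover have "(\<Sum>i\<in>{h..h+m}. F i) = (\<Sum>j\<in>{0..m}. F (h+j))"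
    using sum.shift_bounds_cl_nat_ivl[of F 0 h m] by (simp add: add.commute)
  ultimately show ?thesis by simp
qed

lemma arith: fixes P S1 S2 T1 T2 R c :: real
  shows "P + S1 + T1 \<le> R \<Longrightarrow> P + c + S2 + T2 \<le> R \<Longrightarrow> c \<le> T1 \<Longrightarrow> 0 \<le> T2 \<Longrightarrow> P + c + 1/2*(S1+S2) \<le> R"
proof -
  assume "P + S1 + T1 \<le> R" "P + c + S2 + T2 \<le> R" "c \<le> T1" "0 \<le> T2"
  then have "2*P + 2*c + S1 + S2 \<le> 2*R" by linarith
  then show ?thesis by (simp add: field_simps)
qed

lemma key:
  fixes a b :: "nat \<Rightarrow> real" and p :: real and h m N :: nat
  assumes a: "\<And>j. a j \<ge> 0" and b: "\<And>i. b i \<ge> 0" and p: "p \<ge> 1"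
    and N: "N = 2*h+1+m" and sym: "b h = b (h+m+1)"
  shows "(\<Sum>i<h. b i powr p) + b h powr p + (1/2) * (\<Sum>j\<in>{0..m}.
       (a j + b (h+j)) powr p + (a j + b (h+j+1)) powr p)
     \<le> ((\<Sum>j\<in>{0..m}. a j powr p) powr (1/p) + (\<Sum>i\<in>{0..N}. b i powr p) powr (1/p)) powr p"
proof -
  define R where "R = ((\<Sum>j\<in>{0..m}. a j powr p) powr (1/p) + (\<Sum>i\<in>{0..N}. b i powr p) powr (1/p)) powr p"
  define u1 where "u1 i = (if h \<le> i \<and> i \<le> h+m then a (i-h) else 0)" for i
  define u2 where "u2 i = (if h+1 \<le> i \<and> i \<le> h+1+m then a (i-(h+1)) else 0)" for i
  have p0: "p \<noteq> 0" using p by auto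
  have u1a: "(\<Sum>i\<in>{0..N}. u1 i powr p) = (\<Sum>j\<in>{0..m}. a j powr p)"
    using split3[of h m N "\<lambda>i. u1 i powr p"] N p0 unfolding u1_def by simp
  have u2a: "(\<Sum>i\<in>{0..N}. u2 i powr p) = (\<Sum>j\<in>{0..m}. a j powr p)"
    using split3[of "h+1" m N "\<lambda>i. u2 i powr p"] N p0 unfolding u2_def by simp
  have X1: "(\<Sum>i\<in>{0..N}. (u1 i + b i) powr p) \<le> R"
    using minkowski[of "{0..N}" u1 b p] u1a a b p unfolding R_def u1_def by auto
  have X2: "(\<Sum>i\<in>{0..N}. (u2 i + b i) powr p) \<le> R"
    using minkowski[of "{0..N}" u2 b p] u2a a b p unfolding R_def u2_def by auto
  have E1: "(\<Sum>i\<in>{0..N}. (u1 i + b i) powr p) = (\<Sum>i<h. b i powr p)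
      + (\<Sum>j\<in>{0..m}. (a j + b (h+j)) powr p) + (\<Sum>i\<in>{h+m+1..N}. b i powr p)"
    using split3[of h m N "\<lambda>i. (u1 i + b i) powr p"] N unfolding u1_def by simp
  have E2: "(\<Sum>i\<in>{0..N}. (u2 i + b i) powr p) = (\<Sum>i<h. b i powr p) + b h powr p
      + (\<Sum>j\<in>{0..m}. (a j + b (h+j+1)) powr p) + (\<Sum>i\<in>{h+1+m+1..N}. b i powr p)"
    using split3[of "h+1" m N "\<lambda>i. (u2 i + b i) powr p"] N unfolding u2_def by simp
  have T1: "b h powr p \<le> (\<Sum>i\<in>{h+m+1..N}. b i powr p)"
    unfolding sym using N by (intro member_le_sum) auto
  have T2: "0 \<le> (\<Sum>i\<in>{h+1+m+1..N}. b i powr p)" by (intro sum_nonneg) auto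
  have D: "(\<Sum>j\<in>{0..m}. (a j + b (h+j)) powr p + (a j + b (h+j+1)) powr p) =
     (\<Sum>j\<in>{0..m}. (a j + b (h+j)) powr p) + (\<Sum>j\<in>{0..m}. (a j + b (h+j+1)) powr p)"
    by (rule sum.distrib)
  show ?thesis unfolding R_def[symmetric] D
    using arith[OF X1[unfolded E1] X2[unfolded E2] T1 T2] by simp
qed
theorem mainTheorem20:
  fixes p :: real and n m :: nat
  assumes "1 \<le> p" and "n \<ge> m + 3" and "odd (n - m)"
  shows "((\<Sum>i = 0..(n - m - 3) div 2. real (n choose i) powr p)
          + real (n choose ((n - m - 1) div 2)) powr p
          + (1/2) * (\<Sum>j = 0..m.
               (real (m choose j) + real (n choose ((n - m + 2*j - 1) div 2))) powr p
             + (real (m choose j) + real (n choose ((n - m + 2*j + 1) div 2))) powr p))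
         powr (1/p)
       \<le> (\<Sum>j = 0..m. real (m choose j) powr p) powr (1/p)
         + (\<Sum>j = 0..n. real (n choose j) powr p) powr (1/p)"
proof -
  define h where "h = (n - m - 1) div 2"
  have nh: "n = 2*h+1+m" using assms(2,3) unfolding h_def by (auto elim!: oddE)
  have h1: "h \<ge> 1" using assms(2) nh by simp
  have d1: "(n - m - 3) div 2 = h - 1" using nh h1 by simp
  have d2: "(n - m + 2*j - 1) div 2 = h + j" for j using nh by simp
  have d3: "(n - m + 2*j + 1) div 2 = h + j + 1" for j using nh by simp
  have s1: "{0..h-1} = {..<h}" using h1 by auto
  have sym: "real (n choose h) = real (n choose (h+m+1))"
    using binomial_symmetric[of h n] nh by (simp add: algebra_simps)
  define R where "R = (\<Sum>j = 0..m. real (m choose j) powr p) powr (1/p)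
         + (\<Sum>j = 0..n. real (n choose j) powr p) powr (1/p)"
  have R0: "R \<ge> 0" unfolding R_def by simp
  have K: "(\<Sum>i<h. real (n choose i) powr p) + real (n choose h) powr p + (1/2) * (\<Sum>j\<in>{0..m}.
       (real (m choose j) + real (n choose (h+j))) powr p + (real (m choose j) + real (n choose (h+j+1))) powr p)
     \<le> R powr p"
    unfolding R_def
    using key[of "\<lambda>j. real (m choose j)" "\<lambda>i. real (n choose i)" p n h m] assms(1) nh sym by simp
  have "((\<Sum>i<h. real (n choose i) powr p) + real (n choose h) powr p + (1/2) * (\<Sum>j\<in>{0..m}.
       (real (m choose j) + real (n choose (h+j))) powr p + (real (m choose j) + real (n choose (h+j+1))) powr p))
     powr (1/p) \<le> (R powr p) powr (1/p)"
    using K assms(1) by (intro powr_mono2) (auto intro!: add_nonneg_nonneg sum_nonneg)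
  also have "\<dots> = R" using R0 assms(1) by (simp add: powr_powr)
  finally show ?thesis unfolding R_def d1 d2 d3 s1 h_def[symmetric] .
qed
end
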